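(* Let \(S\) be an inverse semigroup with zero and unit. The category \(\mathsf{Top}^S\) of actions of \(S\) on topological spaces (with \(S\)-equivariant continuous maps) and the category \(\mathsf{Top}^{\mathcal G(S)}\) of actions of the groupoid \(\mathcal G(S)\) on topological spaces (with \(\mathcal G(S)\)-equivariant maps) are isomorphic.
   Context: Inverse semigroups have zero \(0\) and unit \(1\); homomorphisms preserve them. \(E=E(S)\) is the idempotent semilattice (\(e\le f\iff ef=e\)). A character on \(E\) is a map \(\varphi\colon E\to\{0,1\}\) with \(\varphi(0)=0\), \(\varphi(1)=1\), \(\varphi(ef)=\varphi(e)\varphi(f)\). \(\hat E\) is the set of characters, with the topology generated by the sets \(U_e=\{\varphi:\varphi(e)=1\}\). \(S\) acts on \(\hat E\) by \(c_g\colon U_{g^*g}\to U_{gg^*}\), \(g\cdot\varphi(e)=\varphi(g^*eg)\). The groupoid \(\mathcal G(S)\) has object space \(\hat E\). Its arrows are equivalence classes \([s,\varphi]\) of pairs \((s,\varphi)\) with \(s\in S\) and \(\varphi\in U_{s^*s}\), where \((s,\varphi)\sim(t,\psi)\) iff \(\varphi=\psi\) and there is \(e\in E\) with \(se=te\) and \(\varphi(e)=1\). The structure maps are \(\mathrm s([s,\varphi])=\varphi\), \(\mathrm r([s,\varphi])=s\cdot\varphi\), \([s,\varphi][t,\psi]=[st,\psi]\) if \(\varphi=t\cdot\psi\), \([s,\varphi]^{-1}=[s^*,s\cdot\varphi]\), and units \([1,\varphi]\). The arrow space carries the smallest topology in which all sets \(\{[s,\varphi]:\varphi\in U\}\), for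 \(s\in S\) and \(U\subseteq U_{s^*s}\) open, are open. An action of \(S\) on a space \(X\) is a unit- and zero-preserving homomorphism from \(S\) to the inverse semigroup of partial homeomorphisms (homeomorphisms between open subsets) of \(X\). A map \(f\) between \(S\)-spaces is \(S\)-equivariant if \(s\cdot x\) is defined iff \(s\cdot f(x)\) is, and then \(f(s\cdot x)=s\cdot f(x)\). An action of a topological groupoid \(\mathcal G\) on a space \(X\) is a continuous anchor map \(\varrho\colon X\to\mathcal G^{(0)}\) together with a continuous map \(\{(g,x):\mathrm s(g)=\varrho(x)\}\to X\), \((g,x)\mapsto g\cdot x\), satisfying \(\varrho(g\cdot x)=\mathrm r(g)\), \(g_1\cdot(g_2\cdot x)=(g_1g_2)\cdot x\) when defined, and \(1_{\varrho(x)}\cdot x=x\). A map \(f\colon X\to Y\) is \(\mathcal G\)-equivariant if \(\varrho_Y\circ f=\varrho_X\) and \(f(g\cdot x)=g\cdot f(x)\) whenever defined. Spaces need not be Hausdorff. *)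

theory Defs
  imports "HOL-Analysis.Analysis"
begin

text \<open>An inverse semigroup S is represented by a type 'a (the whole type is the carrier)
  with multiplication m, zero z and unit u.\<close>

definition inverse_semigroup01 :: "('a \<Rightarrow> 'a \<Rightarrow> 'a) \<Rightarrow> 'a \<Rightarrow> 'a \<Rightarrow> bool" where
  "inverse_semigroup01 m z u \<longleftrightarrow>
     (\<forall>a b c. m (m a b) c = m a (m b c)) \<and>
     (\<forall>s. \<exists>!t. m (m s t) s = s \<and> m (m t s) t = t) \<and>
     (\<forall>s. m z s = z \<and> m s z = z) \<and>
     (\<forall>s. m u s = s \<and> m s u = s)"

definition istar :: "('a \<Rightarrow> 'a \<Rightarrow> 'a) \<Rightarrow> 'a \<Rightarrow> 'a" where
  "istar m s = (THE t. m (m s t) s = s \<and> m (m t s) t = t)"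

definition idems :: "('a \<Rightarrow> 'a \<Rightarrow> 'a) \<Rightarrow> 'a set" where
  "idems m = {e. m e e = e}"

text \<open>A character is a map E \<rightarrow> {0,1}; we represent it as a predicate on 'a which is
  False outside E (so that characters are determined by their values on E).\<close>

definition chars :: "('a \<Rightarrow> 'a \<Rightarrow> 'a) \<Rightarrow> 'a \<Rightarrow> 'a \<Rightarrow> ('a \<Rightarrow> bool) set" where
  "chars m z u = {\<phi>. (\<forall>x. \<phi> x \<longrightarrow> x \<in> idems m) \<and> \<not> \<phi> z \<and> \<phi> u \<and>
      (\<forall>e\<in>idems m. \<forall>f\<in>idems m. \<phi> (m e f) = (\<phi> e \<and> \<phi> f))}"

definition Uset :: "('a \<Rightarrow> 'a \<Rightarrow> 'a) \<Rightarrow> 'a \<Rightarrow> 'a \<Rightarrow> 'a \<Rightarrow> ('a \<Rightarrow> bool) set" where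
  "Uset m z u e = {\<phi> \<in> chars m z u. \<phi> e}"

definition Ehat_top :: "('a \<Rightarrow> 'a \<Rightarrow> 'a) \<Rightarrow> 'a \<Rightarrow> 'a \<Rightarrow> ('a \<Rightarrow> bool) topology" where
  "Ehat_top m z u = topology_generated_by {Uset m z u e | e. e \<in> idems m}"

text \<open>The action of S on \<open>\<hat>E\<close>: \<open>(g\<cdot>\<phi>)(e) = \<phi>(g\<^sup>*eg)\<close> for \<open>\<phi> \<in> U_{g\<^sup>*g}\<close>.\<close>

definition char_act :: "('a \<Rightarrow> 'a \<Rightarrow> 'a) \<Rightarrow> 'a \<Rightarrow> ('a \<Rightarrow> bool) \<Rightarrow> ('a \<Rightarrow> bool)" where
  "char_act m g \<phi> = (\<lambda>e. e \<in> idems m \<and> \<phi> (m (m (istar m g) e) g))"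

text \<open>An arrow is the equivalence class of a pair (s, \<phi>) with \<open>\<phi> \<in> U_{s\<^sup>*s}\<close>.\<close>

definition germ :: "('a \<Rightarrow> 'a \<Rightarrow> 'a) \<Rightarrow> 'a \<Rightarrow> 'a \<Rightarrow> 'a \<Rightarrow> ('a \<Rightarrow> bool) \<Rightarrow> ('a \<times> ('a \<Rightarrow> bool)) set" where
  "germ m z u s \<phi> = {(t, \<phi>) | t. \<phi> \<in> Uset m z u (m (istar m t) t) \<and>
                         (\<exists>e\<in>idems m. \<phi> e \<and> m s e = m t e)}"

definition arrows :: "('a \<Rightarrow> 'a \<Rightarrow> 'a) \<Rightarrow> 'a \<Rightarrow> 'a \<Rightarrow> ('a \<times> ('a \<Rightarrow> bool)) set set" where
  "arrows m z u = {germ m z u s \<phi> | s \<phi>. \<phi> \<in> Uset m z u (m (istar m s) s)}"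

definition rep :: "('a \<times> ('a \<Rightarrow> bool)) set \<Rightarrow> 'a \<times> ('a \<Rightarrow> bool)" where
  "rep g = (SOME p. p \<in> g)"

definition gsrc :: "('a \<times> ('a \<Rightarrow> bool)) set \<Rightarrow> ('a \<Rightarrow> bool)" where
  "gsrc g = snd (rep g)"

definition grng :: "('a \<Rightarrow> 'a \<Rightarrow> 'a) \<Rightarrow> ('a \<times> ('a \<Rightarrow> bool)) set \<Rightarrow> ('a \<Rightarrow> bool)" where
  "grng m g = char_act m (fst (rep g)) (snd (rep g))"

text \<open>\<open>[s,\<phi>][t,\<psi>] = [st,\<psi>]\<close> (used only when \<open>\<phi> = t\<cdot>\<psi>\<close>).\<close>
definition gmult :: "('a \<Rightarrow> 'a \<Rightarrow> 'a) \<Rightarrow> 'a \<Rightarrow> 'a \<Rightarrow> ('a \<times> ('a \<Rightarrow> bool)) set \<Rightarrow>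
                      ('a \<times> ('a \<Rightarrow> bool)) set \<Rightarrow> ('a \<times> ('a \<Rightarrow> bool)) set" where
  "gmult m z u g h = germ m z u (m (fst (rep g)) (fst (rep h))) (snd (rep h))"

definition gunit :: "('a \<Rightarrow> 'a \<Rightarrow> 'a) \<Rightarrow> 'a \<Rightarrow> 'a \<Rightarrow> ('a \<Rightarrow> bool) \<Rightarrow> ('a \<times> ('a \<Rightarrow> bool)) set" where
  "gunit m z u \<phi> = germ m z u u \<phi>"

definition arrows_top :: "('a \<Rightarrow> 'a \<Rightarrow> 'a) \<Rightarrow> 'a \<Rightarrow> 'a \<Rightarrow> ('a \<times> ('a \<Rightarrow> bool)) set topology" where
  "arrows_top m z u = topology_generated_by
     {{germ m z u s \<phi> | \<phi>. \<phi> \<in> U} | s U.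
        U \<subseteq> Uset m z u (m (istar m s) s) \<and> openin (Ehat_top m z u) U}"

text \<open>An action of S on X: for each s a partial homeomorphism \<open>A s\<close> with open domain
  \<open>D s\<close> and open image, such that \<open>s \<mapsto> (D s, A s)\<close> is a homomorphism into the inverse
  semigroup of partial homeomorphisms (composition of partial maps), preserving zero
  (empty map) and unit (identity of X).\<close>

definition S_action :: "('a \<Rightarrow> 'a \<Rightarrow> 'a) \<Rightarrow> 'a \<Rightarrow> 'a \<Rightarrow> 'x topology \<Rightarrow>
                        ('a \<Rightarrow> 'x set) \<Rightarrow> ('a \<Rightarrow> 'x \<Rightarrow> 'x) \<Rightarrow> bool" where
  "S_action m z u X D A \<longleftrightarrow>
     (\<forall>s. openin X (D s) \<and> openin X (A s ` D s) \<and>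
          homeomorphic_map (subtopology X (D s)) (subtopology X (A s ` D s)) (A s)) \<and>
     (\<forall>s t. D (m s t) = {x \<in> D t. A t x \<in> D s} \<and>
            (\<forall>x \<in> D (m s t). A (m s t) x = A s (A t x))) \<and>
     D z = {} \<and> D u = topspace X \<and> (\<forall>x\<in>topspace X. A u x = x)"

definition S_action_eq :: "('a \<Rightarrow> 'x set) \<Rightarrow> ('a \<Rightarrow> 'x \<Rightarrow> 'x) \<Rightarrow>
                           ('a \<Rightarrow> 'x set) \<Rightarrow> ('a \<Rightarrow> 'x \<Rightarrow> 'x) \<Rightarrow> bool" where
  "S_action_eq D A D' A' \<longleftrightarrow> (\<forall>s. D s = D' s \<and> (\<forall>x\<in>D s. A s x = A' s x))"

definition S_equivariant :: "('a \<Rightarrow> 'x set) \<Rightarrow> ('a \<Rightarrow> 'x \<Rightarrow> 'x) \<Rightarrow>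
      ('a \<Rightarrow> 'y set) \<Rightarrow> ('a \<Rightarrow> 'y \<Rightarrow> 'y) \<Rightarrow> 'x topology \<Rightarrow> ('x \<Rightarrow> 'y) \<Rightarrow> bool" where
  "S_equivariant D A D' A' X f \<longleftrightarrow>
     (\<forall>s. \<forall>x\<in>topspace X. (x \<in> D s \<longleftrightarrow> f x \<in> D' s) \<and>
                          (x \<in> D s \<longrightarrow> f (A s x) = A' s (f x)))"

definition G_action :: "('a \<Rightarrow> 'a \<Rightarrow> 'a) \<Rightarrow> 'a \<Rightarrow> 'a \<Rightarrow> 'x topology \<Rightarrow>
      ('x \<Rightarrow> ('a \<Rightarrow> bool)) \<Rightarrow> (('a \<times> ('a \<Rightarrow> bool)) set \<Rightarrow> 'x \<Rightarrow> 'x) \<Rightarrow> bool" where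
  "G_action m z u X \<rho> act \<longleftrightarrow>
     continuous_map X (Ehat_top m z u) \<rho> \<and>
     continuous_map
       (subtopology (prod_topology (arrows_top m z u) X)
          {(g, x). g \<in> arrows m z u \<and> x \<in> topspace X \<and> gsrc g = \<rho> x})
       X (\<lambda>(g, x). act g x) \<and>
     (\<forall>g x. g \<in> arrows m z u \<and> x \<in> topspace X \<and> gsrc g = \<rho> x \<longrightarrow>
            \<rho> (act g x) = grng m g) \<and>
     (\<forall>g h x. g \<in> arrows m z u \<and> h \<in> arrows m z u \<and> x \<in> topspace X \<and>
              gsrc h = \<rho> x \<and> gsrc g = grng m h \<longrightarrow>
              act g (act h x) = act (gmult m z u g h) x) \<and>
     (\<forall>x\<in>topspace X. act (gunit m z u (\<rho> x)) x = x)"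

definition G_action_eq :: "('a \<Rightarrow> 'a \<Rightarrow> 'a) \<Rightarrow> 'a \<Rightarrow> 'a \<Rightarrow> 'x topology \<Rightarrow>
      ('x \<Rightarrow> ('a \<Rightarrow> bool)) \<Rightarrow> (('a \<times> ('a \<Rightarrow> bool)) set \<Rightarrow> 'x \<Rightarrow> 'x) \<Rightarrow>
      ('x \<Rightarrow> ('a \<Rightarrow> bool)) \<Rightarrow> (('a \<times> ('a \<Rightarrow> bool)) set \<Rightarrow> 'x \<Rightarrow> 'x) \<Rightarrow> bool" where
  "G_action_eq m z u X \<rho> act \<rho>' act' \<longleftrightarrow>
     (\<forall>x\<in>topspace X. \<rho> x = \<rho>' x \<and>
        (\<forall>g\<in>arrows m z u. gsrc g = \<rho> x \<longrightarrow> act g x = act' g x))"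

definition G_equivariant :: "('a \<Rightarrow> 'a \<Rightarrow> 'a) \<Rightarrow> 'a \<Rightarrow> 'a \<Rightarrow> 'x topology \<Rightarrow>
      ('x \<Rightarrow> ('a \<Rightarrow> bool)) \<Rightarrow> (('a \<times> ('a \<Rightarrow> bool)) set \<Rightarrow> 'x \<Rightarrow> 'x) \<Rightarrow>
      ('y \<Rightarrow> ('a \<Rightarrow> bool)) \<Rightarrow> (('a \<times> ('a \<Rightarrow> bool)) set \<Rightarrow> 'y \<Rightarrow> 'y) \<Rightarrow> ('x \<Rightarrow> 'y) \<Rightarrow> bool" where
  "G_equivariant m z u X \<rho> act \<rho>' act' f \<longleftrightarrow>
     (\<forall>x\<in>topspace X. \<rho>' (f x) = \<rho> x \<and>
        (\<forall>g\<in>arrows m z u. gsrc g = \<rho> x \<longrightarrow> f (act g x) = act' g (f x)))"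

section \<open>The two functors (identity on underlying spaces and on maps)\<close>

definition toG_anchor :: "('a \<Rightarrow> 'a \<Rightarrow> 'a) \<Rightarrow> ('a \<Rightarrow> 'x set) \<Rightarrow> 'x \<Rightarrow> ('a \<Rightarrow> bool)" where
  "toG_anchor m D x = (\<lambda>e. e \<in> idems m \<and> x \<in> D e)"

definition toG_act :: "('a \<Rightarrow> 'x \<Rightarrow> 'x) \<Rightarrow> ('a \<times> ('a \<Rightarrow> bool)) set \<Rightarrow> 'x \<Rightarrow> 'x" where
  "toG_act A g x = A (fst (rep g)) x"

definition toS_dom :: "('a \<Rightarrow> 'a \<Rightarrow> 'a) \<Rightarrow> 'x topology \<Rightarrow> ('x \<Rightarrow> ('a \<Rightarrow> bool)) \<Rightarrow> 'a \<Rightarrow> 'x set" where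
  "toS_dom m X \<rho> s = {x \<in> topspace X. \<rho> x (m (istar m s) s)}"

definition toS_act :: "('a \<Rightarrow> 'a \<Rightarrow> 'a) \<Rightarrow> 'a \<Rightarrow> 'a \<Rightarrow> ('x \<Rightarrow> ('a \<Rightarrow> bool)) \<Rightarrow>
      (('a \<times> ('a \<Rightarrow> bool)) set \<Rightarrow> 'x \<Rightarrow> 'x) \<Rightarrow> 'a \<Rightarrow> 'x \<Rightarrow> 'x" where
  "toS_act m z u \<rho> act s x = act (germ m z u s (\<rho> x)) x"

end

theory Submission
  imports Defs
begin


locale invsg =
  fixes m :: "'a \<Rightarrow> 'a \<Rightarrow> 'a" and z u :: 'a
  assumes isg: "inverse_semigroup01 m z u"
begin

lemma assoc: "m (m a b) c = m a (m b c)"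
  using isg unfolding inverse_semigroup01_def by blast

lemma zl[simp]: "m z s = z" and zr[simp]: "m s z = z" and ul[simp]: "m u s = s" and ur[simp]: "m s u = s"
  using isg unfolding inverse_semigroup01_def by blast+

lemma ex1: "\<exists>!t. m (m s t) s = s \<and> m (m t s) t = t"
  using isg unfolding inverse_semigroup01_def by blast

lemma star1: "m (m s (istar m s)) s = s" and star2: "m (m (istar m s) s) (istar m s) = istar m s"
  using theI'[OF ex1[of s]] unfolding istar_def by blast+

lemma star_unique: "m (m s t) s = s \<Longrightarrow> m (m t s) t = t \<Longrightarrow> istar m s = t"
  using ex1[of s] star1[of s] star2[of s] by blast

lemma idem_star: "m e e = e \<Longrightarrow> istar m e = e"
  by (rule star_unique) simp_all

lemma star_star[simp]: "istar m (istar m s) = s"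
  by (rule star_unique) (use star1 star2 assoc in metis)+

lemma idems_comm: assumes "e \<in> idems m" "f \<in> idems m" shows "m e f = m f e" and "m e f \<in> idems m"
proof -
  have E: "m e e = e" "m f f = f" using assms by (auto simp: idems_def)
  have ide: "m (m e f) (m e f) = m e f" if "m e e = e" "m f f = f" for e f
  proof -
    define x where "x = istar m (m e f)"
    have 1: "m (m (m e f) x) (m e f) = m e f" "m (m x (m e f)) x = x"
      unfolding x_def using star1 star2 by blast+
    have "m (m (m e f) (m (m f x) e)) (m e f) = m e f"
      using 1(1) that by (metis assoc)
    moreover have "m (m (m (m f x) e) (m e f)) (m (m f x) e) = m (m f x) e"
      using 1(2) that by (metis assoc)
    ultimately have fx: "m (m f x) e = x" unfolding x_def by (metis star_unique)
    have xx: "m x x = x" using 1 that fx by (metis assoc)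
    have "istar m x = x" using xx by (rule idem_star)
    moreover have "istar m x = m e f" unfolding x_def by simp
    ultimately show ?thesis using xx by simp
  qed
  have a: "m (m e f) (m e f) = m e f" and b: "m (m f e) (m f e) = m f e" using ide E by auto
  have "m (m (m e f) (m f e)) (m e f) = m e f" using a E by (metis assoc)
  moreover have "m (m (m f e) (m e f)) (m f e) = m f e" using b E by (metis assoc)
  ultimately have "istar m (m e f) = m f e" by (rule star_unique)
  moreover have "istar m (m e f) = m e f" using a by (rule idem_star)
  ultimately show "m e f = m f e" by simp
  show "m e f \<in> idems m" using a by (simp add: idems_def)
qed

lemma star1n: "m s (m (istar m s) s) = s" using star1[of s] by (simp add: assoc)
lemma star2n: "m (istar m s) (m s (istar m s)) = istar m s" using star2[of s] by (simp add: assoc)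

lemma star1': "m s (m (istar m s) (m s y)) = m s y"
proof -
  have "m s (m (istar m s) (m s y)) = m (m (m s (istar m s)) s) y" by (simp add: assoc)
  then show ?thesis using star1[of s] by simp
qed

lemma star2': "m (istar m s) (m s (m (istar m s) y)) = m (istar m s) y"
proof -
  have "m (istar m s) (m s (m (istar m s) y)) = m (m (m (istar m s) s) (istar m s)) y" by (simp add: assoc)
  then show ?thesis using star2[of s] by simp
qed

lemma idem': "e \<in> idems m \<Longrightarrow> m e (m e y) = m e y"
  by (simp add: idems_def assoc[symmetric])

lemma ss_idem: "m (istar m s) s \<in> idems m" "m s (istar m s) \<in> idems m"
  unfolding idems_def by (simp_all add: assoc star1' star2')

lemma star_mult: "istar m (m s t) = m (istar m t) (istar m s)"
proof (rule star_unique)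
  have c: "m (m t (istar m t)) (m (istar m s) s) = m (m (istar m s) s) (m t (istar m t))"
    using idems_comm(1)[OF ss_idem(2) ss_idem(1)] .
  have c': "m t (m (istar m t) (m (istar m s) (m s y))) = m (istar m s) (m s (m t (m (istar m t) y)))" for y
    using arg_cong[OF c, of "\<lambda>w. m w y"] by (simp add: assoc)
  have "m (m (m s t) (m (istar m t) (istar m s))) (m s t) = m s (m t (m (istar m t) (m (istar m s) (m s t))))"
    by (simp add: assoc)
  also have "\<dots> = m s t" unfolding c' by (simp add: star1' star1n)
  finally show "m (m (m s t) (m (istar m t) (istar m s))) (m s t) = m s t" .
  have "m (m (m (istar m t) (istar m s)) (m s t)) (m (istar m t) (istar m s)) = m (istar m t) (m (istar m s) (m s (m t (m (istar m t) (istar m s)))))"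
    by (simp add: assoc)
  also have "\<dots> = m (istar m t) (istar m s)" unfolding c'[symmetric] by (simp add: star2' star2n)
  finally show "m (m (m (istar m t) (istar m s)) (m s t)) (m (istar m t) (istar m s)) = m (istar m t) (istar m s)" .
qed

lemma u_idem: "u \<in> idems m" and z_idem: "z \<in> idems m" by (simp_all add: idems_def)

lemma idemD: "e \<in> idems m \<Longrightarrow> m e e = e" by (simp add: idems_def)

lemma istar_idem: "e \<in> idems m \<Longrightarrow> istar m e = e" by (simp add: idems_def idem_star)

lemma conj_idem: assumes "e \<in> idems m" shows "m (m (istar m t) e) t \<in> idems m"
proof -
  have c: "m (m t (istar m t)) e = m e (m t (istar m t))" using idems_comm(1)[OF ss_idem(2) assms] .
  have c': "m t (m (istar m t) (m e y)) = m e (m t (m (istar m t) y))" for y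
    using arg_cong[OF c, of "\<lambda>w. m w y"] by (simp add: assoc)
  have "m (m (m (istar m t) e) t) (m (m (istar m t) e) t) = m (istar m t) (m e (m t (m (istar m t) (m e t))))"
    by (simp add: assoc)
  also have "\<dots> = m (istar m t) (m e (m e (m t (m (istar m t) t))))" unfolding c' ..
  also have "\<dots> = m (istar m t) (m e t)" by (simp add: idem'[OF assms] star1n)
  finally show ?thesis by (simp add: idems_def assoc)
qed

definition sim :: "('a \<Rightarrow> bool) \<Rightarrow> 'a \<Rightarrow> 'a \<Rightarrow> bool" where
  "sim \<phi> s t \<longleftrightarrow> (\<exists>e\<in>idems m. \<phi> e \<and> m s e = m t e)"

lemma charsD:
  assumes "\<phi> \<in> chars m z u"
  shows "\<phi> x \<Longrightarrow> x \<in> idems m" "\<not> \<phi> z" "\<phi> u"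
    "e \<in> idems m \<Longrightarrow> f \<in> idems m \<Longrightarrow> \<phi> (m e f) = (\<phi> e \<and> \<phi> f)"
  using assms unfolding chars_def by auto

lemma sim_refl: "\<phi> \<in> chars m z u \<Longrightarrow> sim \<phi> s s"
  unfolding sim_def using charsD(3) u_idem by blast

lemma sim_sym: "sim \<phi> s t \<Longrightarrow> sim \<phi> t s"
  unfolding sim_def by metis

lemma sim_trans: assumes "\<phi> \<in> chars m z u" "sim \<phi> s t" "sim \<phi> t r" shows "sim \<phi> s r"
proof -
  obtain e f where e: "e \<in> idems m" "\<phi> e" "m s e = m t e" and f: "f \<in> idems m" "\<phi> f" "m t f = m r f"
    using assms(2,3) unfolding sim_def by blast
  have c: "m e f = m f e" using idems_comm(1)[OF e(1) f(1)] .
  have "m s (m e f) = m (m s e) f" by (simp add: assoc)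
  also have "\<dots> = m t (m e f)" using e(3) by (simp add: assoc)
  also have "\<dots> = m (m t f) e" using c by (simp add: assoc)
  also have "\<dots> = m r (m f e)" using f(3) by (simp add: assoc)
  finally have "m s (m e f) = m r (m e f)" using c by simp
  moreover have "\<phi> (m e f)" using charsD(4)[OF assms(1) e(1) f(1)] e f by simp
  ultimately show ?thesis unfolding sim_def using idems_comm(2)[OF e(1) f(1)] by blast
qed

lemma germ_mem: "(t, \<psi>) \<in> germ m z u s \<phi> \<longleftrightarrow> \<psi> = \<phi> \<and> \<phi> \<in> Uset m z u (m (istar m t) t) \<and> sim \<phi> s t"
  unfolding germ_def sim_def by auto

lemma germ_eq: assumes "\<phi> \<in> chars m z u" "sim \<phi> s t" shows "germ m z u s \<phi> = germ m z u t \<phi>"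
proof -
  have "sim \<phi> s r \<longleftrightarrow> sim \<phi> t r" for r using sim_trans[OF assms(1)] sim_sym assms(2) by blast
  then show ?thesis by (auto simp: germ_mem)
qed

lemma Uset_chars: "\<phi> \<in> Uset m z u e \<Longrightarrow> \<phi> \<in> chars m z u" by (simp add: Uset_def)

lemma self_mem: "\<phi> \<in> Uset m z u (m (istar m s) s) \<Longrightarrow> (s, \<phi>) \<in> germ m z u s \<phi>"
  by (simp add: germ_mem sim_refl Uset_chars)

lemma rep_germ: assumes "\<phi> \<in> Uset m z u (m (istar m s) s)"
  shows "snd (rep (germ m z u s \<phi>)) = \<phi>" "sim \<phi> s (fst (rep (germ m z u s \<phi>)))"
    "\<phi> \<in> Uset m z u (m (istar m (fst (rep (germ m z u s \<phi>)))) (fst (rep (germ m z u s \<phi>))))"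
proof -
  have "rep (germ m z u s \<phi>) \<in> germ m z u s \<phi>" unfolding rep_def using self_mem[OF assms] by (rule someI)
  then obtain t \<psi> where "rep (germ m z u s \<phi>) = (t, \<psi>)" "(t, \<psi>) \<in> germ m z u s \<phi>" by (metis surj_pair)
  then show "snd (rep (germ m z u s \<phi>)) = \<phi>" "sim \<phi> s (fst (rep (germ m z u s \<phi>)))"
    "\<phi> \<in> Uset m z u (m (istar m (fst (rep (germ m z u s \<phi>)))) (fst (rep (germ m z u s \<phi>))))"
    by (auto simp: germ_mem)
qed

lemma gsrc_germ: "\<phi> \<in> Uset m z u (m (istar m s) s) \<Longrightarrow> gsrc (germ m z u s \<phi>) = \<phi>"
  using rep_germ(1) by (simp add: gsrc_def)

lemma char_act_sim: assumes "\<phi> \<in> chars m z u" "sim \<phi> s r" shows "char_act m s \<phi> = char_act m r \<phi>"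
proof -
  obtain f where f: "f \<in> idems m" "\<phi> f" "m s f = m r f" using assms(2) unfolding sim_def by blast
  have key: "\<phi> (m (m (istar m s) e) s) = \<phi> (m (m (istar m (m s f)) e) (m s f))" if e: "e \<in> idems m" for e s
  proof -
    define a where "a = m (m (istar m s) e) s"
    have a: "a \<in> idems m" unfolding a_def by (rule conj_idem[OF e])
    have "m (m (istar m (m s f)) e) (m s f) = m f (m a f)"
      unfolding a_def star_mult istar_idem[OF f(1)] by (simp add: assoc)
    also have "\<dots> = m f (m f a)" using idems_comm(1)[OF a f(1)] by simp
    also have "\<dots> = m f a" using idem'[OF f(1)] by simp
    also have "\<dots> = m a f" using idems_comm(1)[OF a f(1)] by simp
    finally have "m (m (istar m (m s f)) e) (m s f) = m a f" .
    moreover have "\<phi> (m a f) = \<phi> a" using charsD(4)[OF assms(1) a f(1)] f(2) by simp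
    ultimately show ?thesis unfolding a_def by simp
  qed
  show ?thesis unfolding char_act_def
    using key[of _ s] key[of _ r] f(3) by (auto intro!: ext)
qed

lemma grng_germ: assumes "\<phi> \<in> Uset m z u (m (istar m s) s)" shows "grng m (germ m z u s \<phi>) = char_act m s \<phi>"
  unfolding grng_def using rep_germ[OF assms] char_act_sim[OF Uset_chars[OF assms]] by simp

lemma arrow_rep: assumes "g \<in> arrows m z u"
  shows "g = germ m z u (fst (rep g)) (gsrc g)" "gsrc g \<in> Uset m z u (m (istar m (fst (rep g))) (fst (rep g)))"
proof -
  obtain s \<phi> where g: "g = germ m z u s \<phi>" and \<phi>: "\<phi> \<in> Uset m z u (m (istar m s) s)"
    using assms unfolding arrows_def by blast
  show "g = germ m z u (fst (rep g)) (gsrc g)" "gsrc g \<in> Uset m z u (m (istar m (fst (rep g))) (fst (rep g)))"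
  proof -
    have r: "gsrc g = \<phi>" "sim \<phi> s (fst (rep g))"
      "\<phi> \<in> Uset m z u (m (istar m (fst (rep g))) (fst (rep g)))"
      using rep_germ[OF \<phi>] g by (simp_all add: gsrc_def)
    have "germ m z u (fst (rep g)) \<phi> = germ m z u s \<phi>"
      using germ_eq[OF Uset_chars[OF \<phi>] sim_sym[OF r(2)]] .
    then show "g = germ m z u (fst (rep g)) (gsrc g)" "gsrc g \<in> Uset m z u (m (istar m (fst (rep g))) (fst (rep g)))"
      using r g by simp_all
  qed
qed

lemma germ_in_arrows: "\<phi> \<in> Uset m z u (m (istar m s) s) \<Longrightarrow> germ m z u s \<phi> \<in> arrows m z u"
  unfolding arrows_def by blast

lemma germ_eq_iff: assumes "\<phi> \<in> Uset m z u (m (istar m s) s)"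
  shows "germ m z u s \<phi> = germ m z u t \<psi> \<longleftrightarrow> \<psi> = \<phi> \<and> sim \<phi> s t"
proof
  assume h: "germ m z u s \<phi> = germ m z u t \<psi>"
  have "(s,\<phi>) \<in> germ m z u t \<psi>" using self_mem[OF assms] h by simp
  thus "\<psi> = \<phi> \<and> sim \<phi> s t" by (auto simp: germ_mem sim_sym)
next
  assume "\<psi> = \<phi> \<and> sim \<phi> s t"
  then show "germ m z u s \<phi> = germ m z u t \<psi>" using germ_eq Uset_chars[OF assms] by blast
qed

end



context invsg begin

definition Gs :: "'a \<Rightarrow> ('a \<times> ('a \<Rightarrow> bool)) set set" where
  "Gs s = {germ m z u s \<phi> | \<phi>. \<phi> \<in> Uset m z u (m (istar m s) s)}"

lemma topspace_Ehat: "topspace (Ehat_top m z u) = chars m z u"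
proof -
  have "Uset m z u u = chars m z u" using charsD(3) by (auto simp: Uset_def)
  then show ?thesis unfolding Ehat_top_def using u_idem by (auto simp: Uset_def)
qed

lemma open_Uset: "e \<in> idems m \<Longrightarrow> openin (Ehat_top m z u) (Uset m z u e)"
  unfolding Ehat_top_def by (rule topology_generated_by_Basis) blast

lemma topspace_arrows: "topspace (arrows_top m z u) = arrows m z u"
proof -
  have "topspace (arrows_top m z u) \<subseteq> arrows m z u"
    unfolding arrows_top_def topology_generated_by_topspace arrows_def by blast
  moreover have "arrows m z u \<subseteq> topspace (arrows_top m z u)"
  proof
    fix g assume "g \<in> arrows m z u"
    then obtain s \<phi> where g: "g = germ m z u s \<phi>" "\<phi> \<in> Uset m z u (m (istar m s) s)"
      unfolding arrows_def by blast
    have "g \<in> {germ m z u s \<phi> | \<phi>. \<phi> \<in> Uset m z u (m (istar m s) s)}" using g by blast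
    moreover have "Uset m z u (m (istar m s) s) \<subseteq> Uset m z u (m (istar m s) s) \<and>
        openin (Ehat_top m z u) (Uset m z u (m (istar m s) s))" using open_Uset ss_idem by blast
    ultimately show "g \<in> topspace (arrows_top m z u)"
      unfolding arrows_top_def topology_generated_by_topspace by blast
  qed
  ultimately show ?thesis by blast
qed

lemma open_Gs: "openin (arrows_top m z u) (Gs s)"
  unfolding arrows_top_def Gs_def
proof (rule topology_generated_by_Basis)
  let ?U = "Uset m z u (m (istar m s) s)"
  have "?U \<subseteq> ?U \<and> openin (Ehat_top m z u) ?U" using open_Uset ss_idem by blast
  then show "{germ m z u s \<phi> |\<phi>. \<phi> \<in> ?U} \<in> {{germ m z u s \<phi> |\<phi>. \<phi> \<in> U} |s U.
        U \<subseteq> Uset m z u (m (istar m s) s) \<and> openin (Ehat_top m z u) U}" by blast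
qed

end

locale sact = invsg +
  fixes X :: "'x topology" and D :: "'a \<Rightarrow> 'x set" and A :: "'a \<Rightarrow> 'x \<Rightarrow> 'x"
  assumes sa: "S_action m z u X D A"
begin

lemma D_open: "openin X (D s)" and img_open: "openin X (A s ` D s)"
  and homeo: "homeomorphic_map (subtopology X (D s)) (subtopology X (A s ` D s)) (A s)"
  and D_mult: "D (m s t) = {x \<in> D t. A t x \<in> D s}"
  and A_mult: "x \<in> D (m s t) \<Longrightarrow> A (m s t) x = A s (A t x)"
  and D_z: "D z = {}" and D_u: "D u = topspace X" and A_u: "x \<in> topspace X \<Longrightarrow> A u x = x"
  using sa unfolding S_action_def by blast+

lemma D_sub: "D s \<subseteq> topspace X" using D_open openin_subset by blast

lemma A_top: "x \<in> D s \<Longrightarrow> A s x \<in> topspace X" using img_open[of s] openin_subset by blast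

lemma A_inj: "inj_on (A s) (D s)"
  using homeomorphic_imp_injective_map[OF homeo[of s]] D_sub by (simp add: Int_absorb1)

lemma A_idem: assumes "e \<in> idems m" "x \<in> D e" shows "A e x = x"
proof -
  have ee: "m e e = e" using assms(1) by (simp add: idems_def)
  have "x \<in> D (m e e)" using ee assms by simp
  hence 1: "A e x \<in> D e" "A e (A e x) = A e x" using D_mult[of e e] A_mult[of x e e] ee by auto
  show ?thesis using A_inj[of e] 1 assms(2) by (auto dest: inj_onD)
qed

lemma D_ss: "D (m (istar m s) s) = D s"
proof
  show "D (m (istar m s) s) \<subseteq> D s" using D_mult by auto
  have "D s = D (m s (m (istar m s) s))" using star1 by (simp add: assoc[symmetric])
  also have "\<dots> \<subseteq> D (m (istar m s) s)" using D_mult by blast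
  finally show "D s \<subseteq> D (m (istar m s) s)" .
qed

lemma D_ss2: "D (m s (istar m s)) = D (istar m s)"
  using D_ss[of "istar m s"] by simp

abbreviation "rho \<equiv> toG_anchor m D"

lemma rho_chars: assumes "x \<in> topspace X" shows "rho x \<in> chars m z u"
proof -
  have "rho x (m e f) = (rho x e \<and> rho x f)" if "e \<in> idems m" "f \<in> idems m" for e f
  proof -
    have "D (m e f) = D e \<inter> D f" using D_mult[of e f] A_idem[OF that(2)] by auto
    then show ?thesis using idems_comm(2)[OF that] that by (auto simp: toG_anchor_def)
  qed
  then show ?thesis using assms D_z D_u u_idem unfolding chars_def toG_anchor_def by auto
qed

lemma rho_U: assumes "x \<in> D s" shows "rho x \<in> Uset m z u (m (istar m s) s)"
proof -
  have "x \<in> topspace X" using assms D_sub by blast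
  then show ?thesis using rho_chars[of x] D_ss[of s] ss_idem(1)[of s] assms by (simp add: Uset_def toG_anchor_def)
qed

lemma rho_U_iff: "x \<in> topspace X \<Longrightarrow> rho x \<in> Uset m z u (m (istar m s) s) \<longleftrightarrow> x \<in> D s"
  using rho_U[of x s] D_ss[of s] by (auto simp: Uset_def toG_anchor_def)

lemma A_sim: assumes "sim (rho x) s t" "x \<in> D s" shows "A t x = A s x"
proof -
  obtain e where e: "e \<in> idems m" "x \<in> D e" "m s e = m t e"
    using assms(1) unfolding sim_def toG_anchor_def by blast
  have "x \<in> D (m s e)" using D_mult[of s e] A_idem[OF e(1,2)] assms(2) e(2) by simp
  hence "x \<in> D (m t e)" using e(3) by simp
  hence "A (m t e) x = A t x" "x \<in> D (m s e)" using A_mult D_mult[of t e] A_idem[OF e(1,2)] e by auto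
  then show ?thesis using e(3) A_mult[of x s e] A_idem[OF e(1,2)] by simp
qed

lemma rho_A: assumes "x \<in> D t" shows "rho (A t x) = char_act m t (rho x)"
proof (rule ext)
  fix e
  show "rho (A t x) e = char_act m t (rho x) e"
  proof (cases "e \<in> idems m")
    case True
    have "x \<in> D (m (m (istar m t) e) t) \<longleftrightarrow> A t x \<in> D e"
    proof -
      have "D (m (m (istar m t) e) t) = {x \<in> D t. A t x \<in> D (m (istar m t) e)}" using D_mult by simp
      moreover have "D (m (istar m t) e) = {y \<in> D e. A e y \<in> D (istar m t)}" using D_mult by simp
      moreover have "A t x \<in> D (istar m t)" using assms D_ss[of t] D_mult[of "istar m t" t] by auto
      ultimately show ?thesis using assms A_idem[OF True] by auto
    qed
    then show ?thesis using True conj_idem[OF True, of t] by (simp add: toG_anchor_def char_act_def)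
  qed (simp add: toG_anchor_def char_act_def)
qed

lemma G_action_from_S: "G_action m z u X rho (toG_act A)"
  unfolding G_action_def
proof (intro conjI allI impI ballI)
  show "continuous_map X (Ehat_top m z u) rho"
    unfolding Ehat_top_def
  proof (rule continuous_on_generated_topo)
    fix U assume "U \<in> {Uset m z u e |e. e \<in> idems m}"
    then obtain e where e: "U = Uset m z u e" "e \<in> idems m" by blast
    have "rho -` U \<inter> topspace X = D e" using e D_sub rho_chars by (auto simp: Uset_def toG_anchor_def)
    then show "openin X (rho -` U \<inter> topspace X)" using D_open by simp
  next
    show "rho ` topspace X \<subseteq> \<Union> {Uset m z u e |e. e \<in> idems m}"
      using rho_chars u_idem charsD(3) by (auto simp: Uset_def)
  qed
next
  define W where "W = {(g, x). g \<in> arrows m z u \<and> x \<in> topspace X \<and> gsrc g = rho x}"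
  have fg: "toG_act A g x = A s x" if hW: "(g,x) \<in> W" and hG: "g \<in> Gs s" for g x s
  proof -
    obtain \<phi> where g: "g = germ m z u s \<phi>" "\<phi> \<in> Uset m z u (m (istar m s) s)" using hG unfolding Gs_def by blast
    have "\<phi> = rho x" using hW gsrc_germ[OF g(2)] g(1) unfolding W_def by simp
    hence xD: "x \<in> D s" using g(2) hW rho_U_iff unfolding W_def by auto
    show ?thesis unfolding toG_act_def g(1) using rep_germ(2)[OF g(2)] \<open>\<phi> = rho x\<close> A_sim xD by simp
  qed
  have inGs: "g \<in> Gs (fst (rep g))" if "(g,x) \<in> W" for g x
    using arrow_rep[of g] that unfolding W_def Gs_def by auto
  have inD: "x \<in> D s" if hW: "(g,x) \<in> W" and hG: "g \<in> Gs s" for g x s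
  proof -
    obtain \<phi> where g: "g = germ m z u s \<phi>" "\<phi> \<in> Uset m z u (m (istar m s) s)" using hG unfolding Gs_def by blast
    have "\<phi> = rho x" using hW gsrc_germ[OF g(2)] g(1) unfolding W_def by simp
    thus ?thesis using g(2) hW rho_U_iff unfolding W_def by auto
  qed
  have topW: "topspace (subtopology (prod_topology (arrows_top m z u) X) W) = W"
    unfolding W_def by (auto simp: topspace_arrows)
  show "continuous_map (subtopology (prod_topology (arrows_top m z u) X)
          {(g, x). g \<in> arrows m z u \<and> x \<in> topspace X \<and> gsrc g = rho x}) X (\<lambda>(g, x). toG_act A g x)"
    unfolding W_def[symmetric] continuous_map_def topW
  proof (intro conjI allI impI)
    show "(\<lambda>(g, x). toG_act A g x) \<in> W \<rightarrow> topspace X"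
      using fg inGs inD A_top by fastforce
    fix V assume V: "openin X V"
    define Op where "Op s = {x \<in> topspace X \<inter> D s. A s x \<in> V}" for s
    have Oo: "openin X (Op s)" for s
    proof -
      have c: "continuous_map (subtopology X (D s)) X (A s)"
        using homeomorphic_imp_continuous_map[OF homeo[of s]] continuous_map_into_fulltopology by blast
      have "openin (subtopology X (D s)) (Op s)"
        using openin_continuous_map_preimage[OF c V] unfolding Op_def by simp
      then show ?thesis using openin_open_subtopology[OF D_open] by blast
    qed
    have key: "(toG_act A g x \<in> V) = (\<exists>s. g \<in> Gs s \<and> x \<in> Op s)" if W: "(g,x) \<in> W" for g x
    proof -
      have xt: "x \<in> topspace X" using W unfolding W_def by simp
      show "(toG_act A g x \<in> V) = (\<exists>s. g \<in> Gs s \<and> x \<in> Op s)"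
      proof
        assume "toG_act A g x \<in> V"
        then show "\<exists>s. g \<in> Gs s \<and> x \<in> Op s"
          using fg[OF W inGs[OF W]] inD[OF W inGs[OF W]] inGs[OF W] xt unfolding Op_def by auto
      next
        assume "\<exists>s. g \<in> Gs s \<and> x \<in> Op s"
        then obtain s where "g \<in> Gs s" "x \<in> Op s" by blast
        then show "toG_act A g x \<in> V" using fg[OF W] unfolding Op_def by auto
      qed
    qed
    have eq: "{p \<in> W. (\<lambda>(g, x). toG_act A g x) p \<in> V} = W \<inter> (\<Union>s. Gs s \<times> Op s)"
      using key by auto
    have "openin (prod_topology (arrows_top m z u) X) (\<Union>s. Gs s \<times> Op s)"
      by (intro openin_Union) (auto simp: openin_prod_Times_iff open_Gs Oo)
    then show "openin (subtopology (prod_topology (arrows_top m z u) X) W)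
       {x \<in> W. (case x of (g, x) \<Rightarrow> toG_act A g x) \<in> V}"
      unfolding eq by (rule openin_subtopology_Int2)
  qed
next
  fix g x assume h: "g \<in> arrows m z u \<and> x \<in> topspace X \<and> gsrc g = rho x"
  define t where "t = fst (rep g)"
  have U: "rho x \<in> Uset m z u (m (istar m t) t)" using arrow_rep(2)[of g] h unfolding t_def by simp
  hence xD: "x \<in> D t" using rho_U_iff h by blast
  show "rho (toG_act A g x) = grng m g"
    unfolding toG_act_def grng_def t_def[symmetric] using rho_A[OF xD] h by (simp add: gsrc_def)
next
  fix g h x assume a: "g \<in> arrows m z u \<and> h \<in> arrows m z u \<and> x \<in> topspace X \<and> gsrc h = rho x \<and> gsrc g = grng m h"
  define t where "t = fst (rep h)"
  define s where "s = fst (rep g)"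
  have Ut: "rho x \<in> Uset m z u (m (istar m t) t)" using arrow_rep(2)[of h] a unfolding t_def by simp
  hence xD: "x \<in> D t" using rho_U_iff a by blast
  have gr: "grng m h = char_act m t (rho x)" unfolding grng_def t_def using a by (simp add: gsrc_def)
  have Us: "gsrc g \<in> Uset m z u (m (istar m s) s)" using arrow_rep(2)[of g] a unfolding s_def by simp
  have rhoA: "rho (A t x) = gsrc g" using rho_A[OF xD] gr a by simp
  have AD: "A t x \<in> D s" using rho_U_iff[of "A t x" s] Us rhoA A_top[OF xD] by simp
  have xst: "x \<in> D (m s t)" using D_mult xD AD by simp
  have Ust: "rho x \<in> Uset m z u (m (istar m (m s t)) (m s t))" using rho_U[OF xst] .
  have "toG_act A (gmult m z u g h) x = A (m s t) x"
    unfolding toG_act_def gmult_def s_def[symmetric] t_def[symmetric]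
    using a rep_germ(1,2)[OF Ust] A_sim xst by (simp add: gsrc_def)
  also have "\<dots> = A s (A t x)" using A_mult xst by simp
  finally show "toG_act A g (toG_act A h x) = toG_act A (gmult m z u g h) x"
    unfolding toG_act_def s_def t_def by simp
next
  fix x assume x: "x \<in> topspace X"
  have Uu: "rho x \<in> Uset m z u (m (istar m u) u)" using rho_U[of x u] D_u x by simp
  show "toG_act A (gunit m z u (rho x)) x = x"
    unfolding toG_act_def gunit_def using rep_germ(2)[OF Uu] A_sim[of x u] D_u x A_u by simp
qed

lemma S_eq: "S_action_eq (toS_dom m X rho) (toS_act m z u rho (toG_act A)) D A"
  unfolding S_action_eq_def
proof (intro allI conjI ballI)
  fix s
  show "toS_dom m X rho s = D s"
    using D_ss[of s] D_sub ss_idem by (auto simp: toS_dom_def toG_anchor_def)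
  fix x assume "x \<in> toS_dom m X rho s"
  hence xD: "x \<in> D s" using D_ss[of s] by (auto simp: toS_dom_def toG_anchor_def)
  show "toS_act m z u rho (toG_act A) s x = A s x"
    unfolding toS_act_def toG_act_def using rep_germ(2)[OF rho_U[OF xD]] A_sim xD by simp
qed

end



context invsg begin

lemma sim_mult: assumes \<phi>: "\<phi> \<in> chars m z u" and 1: "sim (char_act m t \<phi>) s r1" and 2: "sim \<phi> t r2"
  shows "sim \<phi> (m s t) (m r1 r2)"
proof -
  obtain e where e: "e \<in> idems m" "\<phi> (m (m (istar m t) e) t)" "m s e = m r1 e"
    using 1 unfolding sim_def char_act_def by blast
  obtain f where f: "f \<in> idems m" "\<phi> f" "m t f = m r2 f" using 2 unfolding sim_def by blast
  define a where "a = m (m (istar m t) e) t"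
  have a: "a \<in> idems m" unfolding a_def by (rule conj_idem[OF e(1)])
  have ce: "m (m t (istar m t)) e = m e (m t (istar m t))" using idems_comm(1)[OF ss_idem(2) e(1)] .
  have ta: "m t a = m e t" unfolding a_def
  proof -
    have "m t (m (m (istar m t) e) t) = m (m (m t (istar m t)) e) t" by (simp add: assoc)
    also have "\<dots> = m e (m (m t (istar m t)) t)" unfolding ce by (simp add: assoc)
    also have "\<dots> = m e t" using star1 by simp
    finally show "m t (m (m (istar m t) e) t) = m e t" .
  qed
  have key: "m r (m f a) = m (m e t) f" if "m r f = m t f" for r
  proof -
    have "m r (m f a) = m (m r f) a" by (simp add: assoc)
    also have "\<dots> = m t (m f a)" using that by (simp add: assoc)
    also have "\<dots> = m t (m a f)" using idems_comm(1)[OF a f(1)] by simp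
    also have "\<dots> = m (m e t) f" using ta by (simp add: assoc[symmetric])
    finally show ?thesis .
  qed
  have "m (m r1 r2) (m f a) = m (m r1 e) (m t f)"
    using key[of r2] f(3) by (simp add: assoc)
  also have "\<dots> = m (m s t) (m f a)"
    using key[of t] e(3)[symmetric] by (simp add: assoc)
  finally have eq: "m (m s t) (m f a) = m (m r1 r2) (m f a)" by simp
  have "\<phi> (m f a)" using charsD(4)[OF \<phi> f(1) a] f(2) e(2) a_def by simp
  then show ?thesis unfolding sim_def using eq idems_comm(2)[OF f(1) a] by blast
qed

end

locale gact = invsg +
  fixes X :: "'x topology" and \<rho> :: "'x \<Rightarrow> ('a \<Rightarrow> bool)" and act
  assumes ga: "G_action m z u X \<rho> act"
begin

lemma rho_cont: "continuous_map X (Ehat_top m z u) \<rho>"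
  and act_cont: "continuous_map
       (subtopology (prod_topology (arrows_top m z u) X)
          {(g, x). g \<in> arrows m z u \<and> x \<in> topspace X \<and> gsrc g = \<rho> x})
       X (\<lambda>(g, x). act g x)"
  and rho_act: "g \<in> arrows m z u \<Longrightarrow> x \<in> topspace X \<Longrightarrow> gsrc g = \<rho> x \<Longrightarrow> \<rho> (act g x) = grng m g"
  and act_comp: "g \<in> arrows m z u \<Longrightarrow> h \<in> arrows m z u \<Longrightarrow> x \<in> topspace X \<Longrightarrow>
              gsrc h = \<rho> x \<Longrightarrow> gsrc g = grng m h \<Longrightarrow>
              act g (act h x) = act (gmult m z u g h) x"
  and act_unit: "x \<in> topspace X \<Longrightarrow> act (gunit m z u (\<rho> x)) x = x"
  using ga unfolding G_action_def by blast+

lemma rho_chars: "x \<in> topspace X \<Longrightarrow> \<rho> x \<in> chars m z u"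
  using rho_cont topspace_Ehat unfolding continuous_map_def by blast

lemma act_top: assumes "g \<in> arrows m z u" "x \<in> topspace X" "gsrc g = \<rho> x" shows "act g x \<in> topspace X"
proof -
  have "(\<lambda>(g, x). act g x) \<in> topspace (subtopology (prod_topology (arrows_top m z u) X)
          {(g, x). g \<in> arrows m z u \<and> x \<in> topspace X \<and> gsrc g = \<rho> x}) \<rightarrow> topspace X"
    using act_cont unfolding continuous_map_def by blast
  moreover have "(g, x) \<in> topspace (subtopology (prod_topology (arrows_top m z u) X)
          {(g, x). g \<in> arrows m z u \<and> x \<in> topspace X \<and> gsrc g = \<rho> x})"
    using assms by (simp add: topspace_arrows)
  ultimately show ?thesis by (drule_tac funcset_mem) auto
qed

abbreviation "Ds \<equiv> toS_dom m X \<rho>"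
abbreviation "As \<equiv> toS_act m z u \<rho> act"

lemma Ds_sub: "Ds s \<subseteq> topspace X" by (auto simp: toS_dom_def)

lemma Ds_U: "x \<in> Ds s \<Longrightarrow> \<rho> x \<in> Uset m z u (m (istar m s) s)"
  using rho_chars by (auto simp: toS_dom_def Uset_def)

lemma Ds_iff: "x \<in> Ds s \<longleftrightarrow> x \<in> topspace X \<and> \<rho> x \<in> Uset m z u (m (istar m s) s)"
  using rho_chars by (auto simp: toS_dom_def Uset_def)

lemma germ_arr: "x \<in> Ds s \<Longrightarrow> germ m z u s (\<rho> x) \<in> arrows m z u \<and> gsrc (germ m z u s (\<rho> x)) = \<rho> x"
  using germ_in_arrows gsrc_germ Ds_U by blast

lemma As_top: "x \<in> Ds s \<Longrightarrow> As s x \<in> topspace X"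
  unfolding toS_act_def using germ_arr act_top Ds_sub by blast

lemma rho_As: assumes "x \<in> Ds s" shows "\<rho> (As s x) = char_act m s (\<rho> x)"
proof -
  have xt: "x \<in> topspace X" using assms Ds_sub by blast
  have g: "germ m z u s (\<rho> x) \<in> arrows m z u" "gsrc (germ m z u s (\<rho> x)) = \<rho> x"
    using germ_arr[OF assms] by auto
  show ?thesis unfolding toS_act_def rho_act[OF g(1) xt g(2)] grng_germ[OF Ds_U[OF assms]] ..
qed

lemma Ds_idem: "e \<in> idems m \<Longrightarrow> Ds e = {x \<in> topspace X. \<rho> x e}"
  by (simp add: toS_dom_def istar_idem idemD)

lemma Ds_mult: "Ds (m s t) = {x \<in> Ds t. As t x \<in> Ds s}"
proof (rule set_eqI)
  fix x
  define a where "a = m (m (istar m t) (m (istar m s) s)) t"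
  have a: "a \<in> idems m" unfolding a_def by (rule conj_idem[OF ss_idem(1)])
  have aa: "m a (m (istar m t) t) = a" unfolding a_def using star1[of t] by (simp add: assoc)
  have st: "m (istar m (m s t)) (m s t) = a" unfolding a_def star_mult by (simp add: assoc)
  show "x \<in> Ds (m s t) \<longleftrightarrow> x \<in> {x \<in> Ds t. As t x \<in> Ds s}"
  proof
    assume x: "x \<in> Ds (m s t)"
    hence xt: "x \<in> topspace X" "\<rho> x a" using st by (auto simp: toS_dom_def)
    have "\<rho> x (m a (m (istar m t) t)) = (\<rho> x a \<and> \<rho> x (m (istar m t) t))"
      by (rule charsD(4)[OF rho_chars[OF xt(1)] a ss_idem(1)])
    hence "\<rho> x (m (istar m t) t)" using aa xt(2) by simp
    hence xD: "x \<in> Ds t" using xt by (simp add: toS_dom_def)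
    have "As t x \<in> Ds s" using As_top[OF xD] rho_As[OF xD] xt ss_idem unfolding toS_dom_def char_act_def a_def by simp
    thus "x \<in> {x \<in> Ds t. As t x \<in> Ds s}" using xD by simp
  next
    assume "x \<in> {x \<in> Ds t. As t x \<in> Ds s}"
    hence xD: "x \<in> Ds t" and "As t x \<in> Ds s" by auto
    hence "\<rho> x a" using rho_As[OF xD] unfolding toS_dom_def char_act_def a_def by simp
    thus "x \<in> Ds (m s t)" using xD st by (simp add: toS_dom_def)
  qed
qed

lemma As_mult: assumes x: "x \<in> Ds (m s t)" shows "As (m s t) x = As s (As t x)"
proof -
  have xt: "x \<in> Ds t" and yt: "As t x \<in> Ds s" using x Ds_mult by auto
  define g where "g = germ m z u s (\<rho> (As t x))"
  define h where "h = germ m z u t (\<rho> x)"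
  have g: "g \<in> arrows m z u" "gsrc g = \<rho> (As t x)" using germ_arr[OF yt] g_def by auto
  have h: "h \<in> arrows m z u" "gsrc h = \<rho> x" using germ_arr[OF xt] h_def by auto
  have gr: "gsrc g = grng m h" unfolding h_def using g(2) rho_As[OF xt] grng_germ[OF Ds_U[OF xt]] by simp
  have e1: "As s (As t x) = act g (act h x)" unfolding toS_act_def g_def h_def by simp
  have "As s (As t x) = act (gmult m z u g h) x"
    unfolding e1 using act_comp[OF g(1) h(1) _ h(2) gr] xt Ds_sub by blast
  also have "gmult m z u g h = germ m z u (m s t) (\<rho> x)"
  proof -
    have r1: "sim (char_act m t (\<rho> x)) s (fst (rep g))"
      using rep_germ(2)[OF Ds_U[OF yt]] rho_As[OF xt] g_def by simp
    have r2: "sim (\<rho> x) t (fst (rep h))" "snd (rep h) = \<rho> x"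
      using rep_germ(1,2)[OF Ds_U[OF xt]] h_def by auto
    have "sim (\<rho> x) (m s t) (m (fst (rep g)) (fst (rep h)))"
      by (rule sim_mult[OF _ r1 r2(1)]) (use rho_chars xt Ds_sub in blast)
    moreover have "\<rho> x \<in> chars m z u" using rho_chars xt Ds_sub by blast
    ultimately show ?thesis unfolding gmult_def r2(2)
      using germ_eq sim_sym by metis
  qed
  finally show ?thesis unfolding toS_act_def by simp
qed

lemma As_idem: assumes "e \<in> idems m" "x \<in> Ds e" shows "As e x = x"
proof -
  have xt: "x \<in> topspace X" "\<rho> x e" using assms Ds_idem by auto
  have "sim (\<rho> x) e u" unfolding sim_def using assms(1) xt idemD[OF assms(1)] by auto
  hence "germ m z u e (\<rho> x) = gunit m z u (\<rho> x)" unfolding gunit_def using germ_eq rho_chars xt by blast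
  thus ?thesis unfolding toS_act_def using act_unit xt by simp
qed

lemma Ds_ss: "Ds (m (istar m s) s) = Ds s"
  using Ds_idem[OF ss_idem(1)] by (simp add: toS_dom_def)

lemma img: "As s ` Ds s = Ds (istar m s)"
proof
  show "As s ` Ds s \<subseteq> Ds (istar m s)" using Ds_ss[of s] Ds_mult[of "istar m s" s] by auto
  show "Ds (istar m s) \<subseteq> As s ` Ds s"
  proof
    fix y assume y: "y \<in> Ds (istar m s)"
    have "Ds (m s (istar m s)) = Ds (istar m s)" using Ds_ss[of "istar m s"] by simp
    hence y2: "y \<in> Ds (m s (istar m s))" using y by simp
    hence "As (istar m s) y \<in> Ds s" using Ds_mult by auto
    moreover have "As s (As (istar m s) y) = y" using As_mult[OF y2] As_idem[OF ss_idem(2) y2] by simp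
    ultimately show "y \<in> As s ` Ds s" by force
  qed
qed

lemma As_inv: "x \<in> Ds s \<Longrightarrow> As (istar m s) (As s x) = x"
  using As_mult[of x "istar m s" s] As_idem[OF ss_idem(1)] Ds_ss by auto

lemma Ds_open: "openin X (Ds s)"
proof -
  have "Ds s = {x \<in> topspace X. \<rho> x \<in> Uset m z u (m (istar m s) s)}" using Ds_iff by blast
  then show ?thesis using openin_continuous_map_preimage[OF rho_cont open_Uset[OF ss_idem(1)]] by simp
qed

lemma germ_cont: "continuous_map (subtopology X (Ds s)) (arrows_top m z u) (\<lambda>x. germ m z u s (\<rho> x))"
  unfolding arrows_top_def
proof (rule continuous_on_generated_topo)
  show "(\<lambda>x. germ m z u s (\<rho> x)) ` topspace (subtopology X (Ds s)) \<subseteq> \<Union> {{germ m z u s \<phi> |\<phi>. \<phi> \<in> U} |s U.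
         U \<subseteq> Uset m z u (m (istar m s) s) \<and> openin (Ehat_top m z u) U}"
    using topspace_arrows[unfolded arrows_top_def topology_generated_by_topspace] germ_arr Ds_sub by auto
  fix B assume "B \<in> {{germ m z u s \<phi> |\<phi>. \<phi> \<in> U} |s U.
         U \<subseteq> Uset m z u (m (istar m s) s) \<and> openin (Ehat_top m z u) U}"
  then obtain t V where B: "B = {germ m z u t \<phi> |\<phi>. \<phi> \<in> V}" and V: "V \<subseteq> Uset m z u (m (istar m t) t)" "openin (Ehat_top m z u) V"
    by blast
  define P where "P = {x \<in> topspace X. \<rho> x \<in> V} \<inter> (\<Union>e\<in>{e \<in> idems m. m s e = m t e}. {x \<in> topspace X. \<rho> x \<in> Uset m z u e})"
  have "(\<lambda>x. germ m z u s (\<rho> x)) -` B \<inter> topspace (subtopology X (Ds s)) = Ds s \<inter> P"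
  proof (rule set_eqI)
    fix x
    show "x \<in> (\<lambda>x. germ m z u s (\<rho> x)) -` B \<inter> topspace (subtopology X (Ds s)) \<longleftrightarrow> x \<in> Ds s \<inter> P"
    proof (cases "x \<in> Ds s")
      case True
      have "x \<in> (\<lambda>x. germ m z u s (\<rho> x)) -` B \<longleftrightarrow> \<rho> x \<in> V \<and> sim (\<rho> x) s t"
        unfolding B using germ_eq_iff[OF Ds_U[OF True]] by auto
      moreover have "sim (\<rho> x) s t \<longleftrightarrow> (\<exists>e\<in>idems m. m s e = m t e \<and> \<rho> x \<in> Uset m z u e)"
        unfolding sim_def Uset_def using rho_chars True Ds_sub by blast
      ultimately show ?thesis using True Ds_sub unfolding P_def by auto
    qed (use Ds_sub in auto)
  qed
  moreover have "openin X P"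
    unfolding P_def
    by (intro openin_Int openin_Union; auto intro!: openin_continuous_map_preimage[OF rho_cont] open_Uset V(2))
  ultimately show "openin (subtopology X (Ds s)) ((\<lambda>x. germ m z u s (\<rho> x)) -` B \<inter> topspace (subtopology X (Ds s)))"
    by (simp add: openin_subtopology_Int2)
qed

lemma As_cont: "continuous_map (subtopology X (Ds s)) (subtopology X (Ds (istar m s))) (As s)"
proof -
  define W where "W = {(g, x). g \<in> arrows m z u \<and> x \<in> topspace X \<and> gsrc g = \<rho> x}"
  have c1: "continuous_map (subtopology X (Ds s)) (subtopology (prod_topology (arrows_top m z u) X) W)
      (\<lambda>x. (germ m z u s (\<rho> x), x))"
  proof (subst continuous_map_in_subtopology, intro conjI)
    have "snd \<circ> (\<lambda>x. (germ m z u s (\<rho> x), x)) = id" by auto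
    then show "continuous_map (subtopology X (Ds s)) (prod_topology (arrows_top m z u) X) (\<lambda>x. (germ m z u s (\<rho> x), x))"
      unfolding continuous_map_pairwise using germ_cont
      by (simp add: o_def continuous_map_from_subtopology)
    show "(\<lambda>x. (germ m z u s (\<rho> x), x)) \<in> topspace (subtopology X (Ds s)) \<rightarrow> W"
      unfolding W_def using germ_arr Ds_sub by auto
  qed
  have "continuous_map (subtopology X (Ds s)) X ((\<lambda>(g, x). act g x) \<circ> (\<lambda>x. (germ m z u s (\<rho> x), x)))"
    using continuous_map_compose[OF c1 act_cont[folded W_def]] .
  moreover have "As s = (\<lambda>x. act (germ m z u s (\<rho> x)) x)" by (rule ext) (simp add: toS_act_def)
  ultimately have "continuous_map (subtopology X (Ds s)) X (As s)"
    by (simp add: o_def)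
  then show ?thesis
    unfolding continuous_map_in_subtopology using img by auto
qed

lemma S_action_from_G: "S_action m z u X Ds As"
proof -
  have h: "homeomorphic_map (subtopology X (Ds s)) (subtopology X (As s ` Ds s)) (As s)" for s
    unfolding homeomorphic_map_maps homeomorphic_maps_def img
    using As_cont[of s] As_cont[of "istar m s"] As_inv[of _ s] As_inv[of _ "istar m s"] Ds_sub
    by (intro exI[of _ "As (istar m s)"]) auto
  have o: "openin X (As s ` Ds s)" for s unfolding img by (rule Ds_open)
  have dz: "Ds z = {}" using rho_chars charsD(2) by (auto simp: toS_dom_def)
  have du: "Ds u = topspace X" using rho_chars charsD(3) by (auto simp: toS_dom_def istar_idem[OF u_idem])
  have au: "As u x = x" if x: "x \<in> topspace X" for x
    using As_idem[OF u_idem] x du by blast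
  show ?thesis unfolding S_action_def
    using h o dz du au Ds_open Ds_mult As_mult by blast
qed

lemma G_eq: "G_action_eq m z u X (toG_anchor m Ds) (toG_act As) \<rho> act"
  unfolding G_action_eq_def
proof (rule ballI)
  fix x assume x: "x \<in> topspace X"
  have an: "toG_anchor m Ds x = \<rho> x"
  proof (rule ext)
    fix e show "toG_anchor m Ds x e = \<rho> x e"
    proof (cases "e \<in> idems m")
      case True then show ?thesis using Ds_idem[OF True] x by (simp add: toG_anchor_def)
    next
      case False then show ?thesis using charsD(1)[OF rho_chars[OF x]] by (auto simp: toG_anchor_def)
    qed
  qed
  moreover have "\<forall>g\<in>arrows m z u. gsrc g = toG_anchor m Ds x \<longrightarrow> toG_act As g x = act g x"
  proof (intro ballI impI)
    fix g assume g: "g \<in> arrows m z u" "gsrc g = toG_anchor m Ds x"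
    show "toG_act As g x = act g x"
      unfolding toG_act_def toS_act_def using arrow_rep(1)[OF g(1)] g(2) an by simp
  qed
  ultimately show "toG_anchor m Ds x = \<rho> x \<and> (\<forall>g\<in>arrows m z u. gsrc g = toG_anchor m Ds x \<longrightarrow> toG_act As g x = act g x)"
    by blast
qed

end



lemma part1: "inverse_semigroup01 m z u \<Longrightarrow> S_action m z u X D A \<Longrightarrow> G_action m z u X (toG_anchor m D) (toG_act A)"
  by (rule sact.G_action_from_S) (simp add: sact_def invsg_def sact_axioms_def)

lemma part2: "inverse_semigroup01 m z u \<Longrightarrow> G_action m z u X \<rho> act \<Longrightarrow> S_action m z u X (toS_dom m X \<rho>) (toS_act m z u \<rho> act)"
  by (rule gact.S_action_from_G) (simp add: gact_def invsg_def gact_axioms_def)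

lemma part3: "inverse_semigroup01 m z u \<Longrightarrow> S_action m z u X D A \<Longrightarrow>
   S_action_eq (toS_dom m X (toG_anchor m D)) (toS_act m z u (toG_anchor m D) (toG_act A)) D A"
  by (rule sact.S_eq) (simp add: sact_def invsg_def sact_axioms_def)

lemma part4: "inverse_semigroup01 m z u \<Longrightarrow> G_action m z u X \<rho> act \<Longrightarrow>
   G_action_eq m z u X (toG_anchor m (toS_dom m X \<rho>)) (toG_act (toS_act m z u \<rho> act)) \<rho> act"
  by (rule gact.G_eq) (simp add: gact_def invsg_def gact_axioms_def)

lemma part5:
  assumes isg: "inverse_semigroup01 m z u" and a1: "S_action m z u X D A" and a2: "S_action m z u Y D' A'"
    and f: "continuous_map X Y f"
  shows "S_equivariant D A D' A' X f \<longleftrightarrow>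
         G_equivariant m z u X (toG_anchor m D) (toG_act A) (toG_anchor m D') (toG_act A') f"
proof -
  interpret S1: sact m z u X D A by (simp add: sact_def invsg_def sact_axioms_def isg a1)
  interpret S2: sact m z u Y D' A' by (simp add: sact_def invsg_def sact_axioms_def isg a2)
  have fx: "x \<in> topspace X \<Longrightarrow> f x \<in> topspace Y" for x using f unfolding continuous_map_def by blast
  show ?thesis
  proof
    assume eq: "S_equivariant D A D' A' X f"
    show "G_equivariant m z u X (toG_anchor m D) (toG_act A) (toG_anchor m D') (toG_act A') f"
      unfolding G_equivariant_def
    proof (intro ballI conjI impI)
      fix x assume x: "x \<in> topspace X"
      show an: "toG_anchor m D' (f x) = toG_anchor m D x"
        using eq x unfolding S_equivariant_def toG_anchor_def by auto
      fix g assume g: "g \<in> arrows m z u" "gsrc g = toG_anchor m D x"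
      define t where "t = fst (rep g)"
      have "toG_anchor m D x \<in> Uset m z u (m (istar m t) t)" using S1.arrow_rep(2)[OF g(1)] g(2) t_def by simp
      hence "x \<in> D t" using S1.rho_U_iff x by blast
      then show "f (toG_act A g x) = toG_act A' g (f x)"
        using eq x unfolding S_equivariant_def toG_act_def t_def by blast
    qed
  next
    assume eq: "G_equivariant m z u X (toG_anchor m D) (toG_act A) (toG_anchor m D') (toG_act A') f"
    have an: "toG_anchor m D' (f x) = toG_anchor m D x" if "x \<in> topspace X" for x
      using eq that unfolding G_equivariant_def by blast
    show "S_equivariant D A D' A' X f"
      unfolding S_equivariant_def
    proof (intro allI ballI conjI impI)
      fix s x assume x: "x \<in> topspace X"
      have "x \<in> D s \<longleftrightarrow> toG_anchor m D x (m (istar m s) s)"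
        using S1.D_ss[of s] S1.ss_idem by (simp add: toG_anchor_def)
      also have "\<dots> \<longleftrightarrow> toG_anchor m D' (f x) (m (istar m s) s)" using an[OF x] by simp
      also have "\<dots> \<longleftrightarrow> f x \<in> D' s"
        using S2.D_ss[of s] S1.ss_idem by (simp add: toG_anchor_def)
      finally show D: "x \<in> D s \<longleftrightarrow> f x \<in> D' s" .
      assume xD: "x \<in> D s"
      define g where "g = germ m z u s (toG_anchor m D x)"
      have U: "toG_anchor m D x \<in> Uset m z u (m (istar m s) s)" by (rule S1.rho_U[OF xD])
      have g: "g \<in> arrows m z u" "gsrc g = toG_anchor m D x"
        unfolding g_def using S1.germ_in_arrows[OF U] S1.gsrc_germ[OF U] by auto
      have "f (toG_act A g x) = toG_act A' g (f x)" using eq x g unfolding G_equivariant_def by blast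
      moreover have "toG_act A g x = A s x"
        unfolding toG_act_def g_def using S1.rep_germ(2)[OF U] S1.A_sim xD by simp
      moreover have "toG_act A' g (f x) = A' s (f x)"
        unfolding toG_act_def g_def using S1.rep_germ(2)[OF U] S2.A_sim[of "f x" s] D xD an[OF x] by simp
      ultimately show "f (A s x) = A' s (f x)" by simp
    qed
  qed
qed

lemma part6:
  assumes isg: "inverse_semigroup01 m z u" and a1: "G_action m z u X \<rho> act" and a2: "G_action m z u Y \<rho>' act'"
    and f: "continuous_map X Y f"
  shows "G_equivariant m z u X \<rho> act \<rho>' act' f \<longleftrightarrow>
         S_equivariant (toS_dom m X \<rho>) (toS_act m z u \<rho> act) (toS_dom m Y \<rho>') (toS_act m z u \<rho>' act') X f"
proof -
  interpret G1: gact m z u X \<rho> act by (simp add: gact_def invsg_def gact_axioms_def isg a1)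
  interpret G2: gact m z u Y \<rho>' act' by (simp add: gact_def invsg_def gact_axioms_def isg a2)
  have fx: "x \<in> topspace X \<Longrightarrow> f x \<in> topspace Y" for x using f unfolding continuous_map_def by blast
  show ?thesis
  proof
    assume eq: "G_equivariant m z u X \<rho> act \<rho>' act' f"
    have an: "\<rho>' (f x) = \<rho> x" if "x \<in> topspace X" for x using eq that unfolding G_equivariant_def by blast
    show "S_equivariant (toS_dom m X \<rho>) (toS_act m z u \<rho> act) (toS_dom m Y \<rho>') (toS_act m z u \<rho>' act') X f"
      unfolding S_equivariant_def
    proof (intro allI ballI conjI impI)
      fix s x assume x: "x \<in> topspace X"
      show D: "x \<in> toS_dom m X \<rho> s \<longleftrightarrow> f x \<in> toS_dom m Y \<rho>' s"
        using x fx[OF x] an[OF x] by (simp add: toS_dom_def)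
      assume xD: "x \<in> toS_dom m X \<rho> s"
      have g: "germ m z u s (\<rho> x) \<in> arrows m z u" "gsrc (germ m z u s (\<rho> x)) = \<rho> x"
        using G1.germ_arr[OF xD] by auto
      show "f (toS_act m z u \<rho> act s x) = toS_act m z u \<rho>' act' s (f x)"
        unfolding toS_act_def using eq x g an[OF x] unfolding G_equivariant_def by simp
    qed
  next
    assume eq: "S_equivariant (toS_dom m X \<rho>) (toS_act m z u \<rho> act) (toS_dom m Y \<rho>') (toS_act m z u \<rho>' act') X f"
    show "G_equivariant m z u X \<rho> act \<rho>' act' f"
      unfolding G_equivariant_def
    proof (intro ballI conjI impI)
      fix x assume x: "x \<in> topspace X"
      have D: "x \<in> toS_dom m X \<rho> s \<longleftrightarrow> f x \<in> toS_dom m Y \<rho>' s" for s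
        using eq x unfolding S_equivariant_def by blast
      show an: "\<rho>' (f x) = \<rho> x"
      proof (rule ext)
        fix e
        show "\<rho>' (f x) e = \<rho> x e"
        proof (cases "e \<in> idems m")
          case True
          then show ?thesis using D[of e] x fx[OF x] by (simp add: G1.Ds_idem G2.Ds_idem)
        next
          case False
          then show ?thesis using G1.charsD(1)[OF G1.rho_chars[OF x]] G1.charsD(1)[OF G2.rho_chars[OF fx[OF x]]] by blast
        qed
      qed
      fix g assume g: "g \<in> arrows m z u" "gsrc g = \<rho> x"
      define s where "s = fst (rep g)"
      have gg: "g = germ m z u s (\<rho> x)" using G1.arrow_rep(1)[OF g(1)] g(2) s_def by simp
      have xD: "x \<in> toS_dom m X \<rho> s" using G1.arrow_rep(2)[OF g(1)] g(2) x G1.Ds_iff s_def by simp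
      have "f (toS_act m z u \<rho> act s x) = toS_act m z u \<rho>' act' s (f x)"
        using eq x xD unfolding S_equivariant_def by blast
      then show "f (act g x) = act' g (f x)" unfolding toS_act_def gg an by simp
    qed
  qed
qed


theorem theorem3p7:
  fixes m :: "'a \<Rightarrow> 'a \<Rightarrow> 'a" and z u :: 'a
  assumes "inverse_semigroup01 m z u"
  shows
    \<comment> \<open>object part: S-actions go to \<G>(S)-actions and back\<close>
    "(\<forall>(X :: 'x topology) D A. S_action m z u X D A \<longrightarrow>
        G_action m z u X (toG_anchor m D) (toG_act A))
   \<and> (\<forall>(X :: 'x topology) \<rho> act. G_action m z u X \<rho> act \<longrightarrow>
        S_action m z u X (toS_dom m X \<rho>) (toS_act m z u \<rho> act))
   \<comment> \<open>the two object maps are mutually inverse\<close>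
   \<and> (\<forall>(X :: 'x topology) D A. S_action m z u X D A \<longrightarrow>
        S_action_eq (toS_dom m X (toG_anchor m D)) (toS_act m z u (toG_anchor m D) (toG_act A)) D A)
   \<and> (\<forall>(X :: 'x topology) \<rho> act. G_action m z u X \<rho> act \<longrightarrow>
        G_action_eq m z u X (toG_anchor m (toS_dom m X \<rho>)) (toG_act (toS_act m z u \<rho> act)) \<rho> act)
   \<comment> \<open>morphism part: a continuous map is S-equivariant iff it is \<G>(S)-equivariant\<close>
   \<and> (\<forall>(X :: 'x topology) (Y :: 'y topology) D A D' A' (f :: 'x \<Rightarrow> 'y).
        S_action m z u X D A \<and> S_action m z u Y D' A' \<and> continuous_map X Y f \<longrightarrow>
        (S_equivariant D A D' A' X f \<longleftrightarrow>
         G_equivariant m z u X (toG_anchor m D) (toG_act A) (toG_anchor m D') (toG_act A') f))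
   \<and> (\<forall>(X :: 'x topology) (Y :: 'y topology) \<rho> act \<rho>' act' (f :: 'x \<Rightarrow> 'y).
        G_action m z u X \<rho> act \<and> G_action m z u Y \<rho>' act' \<and> continuous_map X Y f \<longrightarrow>
        (G_equivariant m z u X \<rho> act \<rho>' act' f \<longleftrightarrow>
         S_equivariant (toS_dom m X \<rho>) (toS_act m z u \<rho> act) (toS_dom m Y \<rho>') (toS_act m z u \<rho>' act') X f))"
  apply (intro conjI allI impI)
       apply (erule part1[OF assms])
      apply (erule part2[OF assms])
     apply (erule part3[OF assms])
    apply (erule part4[OF assms])
   apply (elim conjE, erule (2) part5[OF assms])
  apply (elim conjE, erule (2) part6[OF assms])
  done

end
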